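(* Fix $c>0$ and an integer $k\ge1$, and let $\Phi\in\Omega(n,\lfloor c2^n\rfloor)$. Then with probability $1-o(1)$ (as $n\to\infty$), PUR does not reject at any of the stages $n,n-1,\dots,n-k+1$.
   Context: $\mathcal H_n$ is the set of pairs $(P,S)$ with $P\in\{\emptyset,\{1\},\dots,\{n\}\}$, $S\subseteq\{1,\dots,n\}$, $(P,S)\ne(\emptyset,\emptyset)$, representing the Horn clause $\bigvee_{i\in P}x_i\vee\bigvee_{j\in S}\neg x_j$ (so $|\mathcal H_n|\sim n2^n$; the paper writes this number as $(n+2)2^n-1$); $\Omega(n,m)$ is the distribution of the conjunction of $m$ clauses drawn independently, uniformly with repetition from $\mathcal H_n$. Algorithm PUR on a Horn formula $\Phi$: if $\Phi$ has no positive unit clause (single literal $x_i$), accept. Otherwise choose uniformly at random a positive unit clause $x_i$; if $\Phi$ contains the clause $\neg x_i$, reject; otherwise set $x_i=1$ (delete clauses containing $x_i$, delete $\neg x_i$ from the others) and recurse. Stage $t$ is the iteration performed when exactly $t$ variables are unassigned (first iteration = stage $n$). *)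

theory Defs
  imports "HOL-Probability.Probability"
begin

text \<open>A Horn clause (P,S): P = None (no positive literal) or Some i (positive literal x_i);
  S = set of indices of negated variables.\<close>
type_synonym clause = "nat option \<times> nat set"

definition horn_clauses :: "nat \<Rightarrow> clause set" where
  "horn_clauses n = {(P, S). (P = None \<or> (\<exists>i\<in>{1..n}. P = Some i)) \<and> S \<subseteq> {1..n}
                            \<and> (P, S) \<noteq> (None, {})}"

primrec iid_list :: "nat \<Rightarrow> 'a pmf \<Rightarrow> 'a list pmf" where
  "iid_list 0 p = return_pmf []"
| "iid_list (Suc m) p = bind_pmf p (\<lambda>x. map_pmf (Cons x) (iid_list m p))"

text \<open>The distribution Omega(n,m) of random Horn formulas (conjunction of the listed clauses).\<close>
definition Omega :: "nat \<Rightarrow> nat \<Rightarrow> clause list pmf" where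
  "Omega n m = iid_list m (pmf_of_set (horn_clauses n))"

definition pos_units :: "clause list \<Rightarrow> nat set" where
  "pos_units \<Phi> = {i. (Some i, {}) \<in> set \<Phi>}"

definition assign_true :: "nat \<Rightarrow> clause list \<Rightarrow> clause list" where
  "assign_true i \<Phi> = map (\<lambda>(P, S). (P, S - {i})) (filter (\<lambda>(P, S). P \<noteq> Some i) \<Phi>)"

text \<open>pur_rejects_within k Phi: the (random) event that PUR run on Phi rejects during one of
  its first k iterations (i.e. at one of the stages n, n-1, ..., n-k+1).\<close>
primrec pur_rejects_within :: "nat \<Rightarrow> clause list \<Rightarrow> bool pmf" where
  "pur_rejects_within 0 \<Phi> = return_pmf False"
| "pur_rejects_within (Suc k) \<Phi> =
     (if pos_units \<Phi> = {} then return_pmf False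
      else bind_pmf (pmf_of_set (pos_units \<Phi>))
        (\<lambda>i. if (None, {i}) \<in> set \<Phi> then return_pmf True
             else pur_rejects_within k (assign_true i \<Phi>)))"

end

theory Submission imports Defs begin

lemma prob_bind_pmf:
  "measure_pmf.prob (bind_pmf M f) X = (\<integral>x. measure_pmf.prob (f x) X \<partial>measure_pmf M)"
  unfolding measure_pmf_bind
  by (rule measure_pmf.measure_bind[where N="count_space UNIV"]) (auto simp: measurable_measure_pmf space_subprob_algebra subprob_space_measure_pmf)

lemma iid_subset_bound:
  fixes p :: "'a pmf" and q :: real
  assumes q: "\<And>c. pmf p c \<le> q"
  shows "finite C \<Longrightarrow> measure_pmf.prob (iid_list m p) {xs. C \<subseteq> set xs} \<le> (real m * q) ^ card C"
proof (induction m arbitrary: C)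
  case 0
  then show ?case by (cases "C = {}") auto
next
  case (Suc m)
  have q0: "0 \<le> q" using q[of undefined] pmf_nonneg[of p undefined] by linarith
  define a where "a = (real m * q) ^ card C"
  define b where "b = (real m * q) ^ (card C - 1)"
  have a0: "0 \<le> a" "0 \<le> b" using q0 by (auto simp: a_def b_def)
  have "measure_pmf.prob (iid_list (Suc m) p) {xs. C \<subseteq> set xs}
      = (\<integral>x. measure_pmf.prob (iid_list m p) {ys. C - {x} \<subseteq> set ys} \<partial>measure_pmf p)"
  proof -
    have e: "\<And>x. (Cons x) -` {xs. C \<subseteq> set xs} = {ys. C - {x} \<subseteq> set ys}" by auto
    show ?thesis by (simp only: iid_list.simps prob_bind_pmf measure_map_pmf e)
  qed
  also have "\<dots> \<le> (\<integral>x. a + (\<Sum>c\<in>C. indicator {c} x * b) \<partial>measure_pmf p)"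
  proof (rule integral_mono)
    show "integrable (measure_pmf p) (\<lambda>x. measure_pmf.prob (iid_list m p) {ys. C - {x} \<subseteq> set ys})"
      by (intro measure_pmf.integrable_const_bound[where B=1]) auto
    show "integrable (measure_pmf p) (\<lambda>x. a + (\<Sum>c\<in>C. indicator {c} x * b))"
      by (intro Bochner_Integration.integrable_add measure_pmf.integrable_const
            Bochner_Integration.integrable_sum integrable_mult_left integrable_real_indicator)
         (auto simp: measure_pmf.emeasure_finite less_top[symmetric])
    fix x
    show "measure_pmf.prob (iid_list m p) {ys. C - {x} \<subseteq> set ys} \<le> a + (\<Sum>c\<in>C. indicator {c} x * b)"
    proof (cases "x \<in> C")
      case True
      have "measure_pmf.prob (iid_list m p) {ys. C - {x} \<subseteq> set ys} \<le> b"
        using Suc.IH[of "C - {x}"] Suc.prems True by (simp add: b_def)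
      moreover have "(\<Sum>c\<in>C. indicator {c} x * b) = b"
        using True Suc.prems by (simp add: indicator_def sum.If_cases)
      ultimately show ?thesis using a0 by simp
    next
      case False
      then have "C - {x} = C" by auto
      have "(\<Sum>c\<in>C. indicator {c} x * b) = (0::real)"
        using False by (intro sum.neutral) (auto simp: indicator_def)
      with \<open>C - {x} = C\<close> show ?thesis using Suc.IH[of C] Suc.prems
        by (simp add: a_def)
    qed
  qed
  also have "\<dots> = a + (\<Sum>c\<in>C. pmf p c * b)"
  proof -
    have ii: "\<And>c. integrable (measure_pmf p) (\<lambda>x. indicator {c} x * b :: real)"
      by (intro integrable_mult_left integrable_real_indicator)
         (auto simp: measure_pmf.emeasure_finite less_top[symmetric])
    have "(\<integral>x. a + (\<Sum>c\<in>C. indicator {c} x * b) \<partial>measure_pmf p)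
        = a + (\<integral>x. (\<Sum>c\<in>C. indicator {c} x * b) \<partial>measure_pmf p)"
      by (subst Bochner_Integration.integral_add) (auto intro!: Bochner_Integration.integrable_sum ii)
    also have "(\<integral>x. (\<Sum>c\<in>C. indicator {c} x * b) \<partial>measure_pmf p) = (\<Sum>c\<in>C. \<integral>x. indicator {c} x * b \<partial>measure_pmf p)"
      by (rule Bochner_Integration.integral_sum) (rule ii)
    also have "\<dots> = (\<Sum>c\<in>C. pmf p c * b)"
      by (simp add: measure_pmf_single)
    finally show ?thesis .
  qed
  also have "\<dots> \<le> a + (\<Sum>c\<in>C. q * b)"
    by (intro add_left_mono sum_mono mult_right_mono q a0)
  also have "\<dots> \<le> (real (Suc m) * q) ^ card C"
  proof (cases "card C")
    case 0 then show ?thesis by (simp add: a_def)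
  next
    case (Suc r)
    have "(real m * q + q) ^ Suc r \<ge> (real m * q) ^ Suc r + real (Suc r) * q * (real m * q) ^ r"
    proof -
      have "(real m * q + q) ^ Suc r = (\<Sum>i\<le>Suc r. real (Suc r choose i) * q ^ i * (real m * q) ^ (Suc r - i))"
        by (subst add.commute) (rule binomial_ring)
      also have "\<dots> \<ge> (\<Sum>i\<in>{0,1}. real (Suc r choose i) * q ^ i * (real m * q) ^ (Suc r - i))"
        by (rule sum_mono2) (use q0 in auto)
      finally show ?thesis by simp
    qed
    then show ?thesis using Suc by (simp add: a_def b_def algebra_simps)
  qed
  finally show ?case .
qed

definition cur :: "nat list \<Rightarrow> clause list \<Rightarrow> clause list" where
  "cur A \<Phi> = map (\<lambda>(P, S). (P, S - set A)) (filter (\<lambda>(P, S). P \<notin> Some ` set A) \<Phi>)"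

lemma cur_Nil: "cur [] \<Phi> = \<Phi>"
  by (induction \<Phi>) (auto simp: cur_def)

lemma cur_snoc: "assign_true i (cur A \<Phi>) = cur (A @ [i]) \<Phi>"
  by (induction \<Phi>) (auto simp: cur_def assign_true_def Diff_insert[symmetric] insert_commute)

lemma finite_pos_units: "finite (pos_units \<Phi>)"
proof -
  have "pos_units \<Phi> \<subseteq> (\<lambda>(P, S). the P) ` set \<Phi>"
    by (force simp: pos_units_def)
  then show ?thesis by (rule finite_subset) auto
qed

lemma reject_chain:
  "True \<in> set_pmf (pur_rejects_within k (cur A \<Phi>)) \<Longrightarrow>
   \<exists>B Ts S. B \<noteq> [] \<and> length B \<le> k \<and> distinct B \<and> set B \<inter> set A = {} \<and> length Ts = length B \<and>
     (\<forall>l<length B. Ts ! l \<subseteq> set A \<union> set B \<and> (Some (B ! l), Ts ! l) \<in> set \<Phi>) \<and>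
     S \<subseteq> set A \<union> set B \<and> (None, S) \<in> set \<Phi>"
proof (induction k arbitrary: A)
  case 0
  then show ?case by simp
next
  case (Suc k)
  have ne: "pos_units (cur A \<Phi>) \<noteq> {}"
    using Suc.prems by (auto split: if_splits)
  with Suc.prems obtain i where i: "i \<in> pos_units (cur A \<Phi>)" and
    r: "True \<in> set_pmf (if (None, {i}) \<in> set (cur A \<Phi>) then return_pmf True
             else pur_rejects_within k (assign_true i (cur A \<Phi>)))"
    by (auto simp: finite_pos_units)
  from i obtain T where T: "(Some i, T) \<in> set \<Phi>" "i \<notin> set A" "T \<subseteq> set A"
    by (force simp: pos_units_def cur_def)
  show ?case
  proof (cases "(None, {i}) \<in> set (cur A \<Phi>)")
    case True
    then obtain S where S: "(None, S) \<in> set \<Phi>" "S - set A = {i}"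
      by (force simp: cur_def)
    show ?thesis
      by (rule exI[of _ "[i]"], rule exI[of _ "[T]"], rule exI[of _ S]) (use T S in auto)
  next
    case False
    with r have "True \<in> set_pmf (pur_rejects_within k (cur (A @ [i]) \<Phi>))"
      by (simp add: cur_snoc)
    from Suc.IH[OF this] obtain B Ts S where IH: "B \<noteq> []" "length B \<le> k" "distinct B"
      "set B \<inter> set (A @ [i]) = {}" "length Ts = length B"
      "\<forall>l<length B. Ts ! l \<subseteq> set (A @ [i]) \<union> set B \<and> (Some (B ! l), Ts ! l) \<in> set \<Phi>"
      "S \<subseteq> set (A @ [i]) \<union> set B" "(None, S) \<in> set \<Phi>" by blast
    have "\<forall>l<length (i # B). (T # Ts) ! l \<subseteq> set A \<union> set (i # B) \<and> (Some ((i # B) ! l), (T # Ts) ! l) \<in> set \<Phi>"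
    proof (intro allI impI)
      fix l assume "l < length (i # B)"
      then show "(T # Ts) ! l \<subseteq> set A \<union> set (i # B) \<and> (Some ((i # B) ! l), (T # Ts) ! l) \<in> set \<Phi>"
        using IH(6) T by (cases l) auto
    qed
    then show ?thesis
      by (intro exI[of _ "i # B"] exI[of _ "T # Ts"] exI[of _ S]) (use IH T in auto)
  qed
qed

definition Wj :: "nat \<Rightarrow> nat \<Rightarrow> (nat list \<times> nat set list \<times> nat set) set" where
  "Wj n j = {(B, TI, SI). length B = j \<and> distinct B \<and> set B \<subseteq> {1..n} \<and> length TI = j \<and>
     set TI \<subseteq> Pow {..<j} \<and> SI \<subseteq> {..<j}}"

definition clauses_of :: "nat list \<times> nat set list \<times> nat set \<Rightarrow> clause set" where
  "clauses_of w = (case w of (B, TI, SI) \<Rightarrow>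
     insert (None, (!) B ` SI) ((\<lambda>l. (Some (B ! l), (!) B ` (TI ! l))) ` {..<length B}))"

lemma idx_image: "T \<subseteq> set B \<Longrightarrow> (!) B ` {p. p < length B \<and> B ! p \<in> T} = T"
  by (auto simp: in_set_conv_nth image_iff) (metis in_set_conv_nth subsetD)

lemma bad_witness:
  assumes "set \<Phi> \<subseteq> horn_clauses n" "True \<in> set_pmf (pur_rejects_within k \<Phi>)"
  shows "\<exists>j\<in>{1..k}. \<exists>w\<in>Wj n j. clauses_of w \<subseteq> set \<Phi>"
proof -
  from reject_chain[of k "[]" \<Phi>] assms(2) obtain B Ts S where B: "B \<noteq> []" "length B \<le> k" "distinct B"
      "length Ts = length B"
      "\<forall>l<length B. Ts ! l \<subseteq> set B \<and> (Some (B ! l), Ts ! l) \<in> set \<Phi>"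
      "S \<subseteq> set B" "(None, S) \<in> set \<Phi>" by (auto simp: cur_Nil)
  define ix where "ix = (\<lambda>T. {p. p < length B \<and> B ! p \<in> T})"
  define w where "w = (B, map ix Ts, ix S)"
  have "set B \<subseteq> {1..n}"
  proof
    fix x assume "x \<in> set B"
    then obtain l where "l < length B" "x = B ! l" by (auto simp: in_set_conv_nth)
    then have "(Some x, Ts ! l) \<in> horn_clauses n" using B(5) assms(1) by auto
    then show "x \<in> {1..n}" by (auto simp: horn_clauses_def)
  qed
  then have "w \<in> Wj n (length B)"
    using B by (auto simp: w_def Wj_def ix_def)
  moreover have "clauses_of w \<subseteq> set \<Phi>"
    using B by (auto simp: w_def clauses_of_def ix_def idx_image)
  ultimately show ?thesis using B(1,2) by (intro bexI[of _ "length B"]) (auto simp: Suc_le_eq)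
qed

lemma finite_card_Wj: "finite (Wj n j) \<and> card (Wj n j) \<le> n ^ j * (2 ^ j) ^ j * 2 ^ j"
proof -
  let ?X = "{B. set B \<subseteq> {1..n} \<and> length B = j} \<times> {TI. set TI \<subseteq> Pow {..<j} \<and> length TI = j} \<times> Pow {..<j}"
  have sub: "Wj n j \<subseteq> ?X" by (auto simp: Wj_def)
  have fin: "finite ?X" by (auto intro!: finite_lists_length_eq)
  have "card ?X = n ^ j * (2 ^ j) ^ j * 2 ^ j"
    by (simp add: card_cartesian_product card_lists_length_eq card_Pow)
  then show ?thesis using card_mono[OF fin sub] finite_subset[OF sub fin] by simp
qed

lemma card_clauses_of: "w \<in> Wj n j \<Longrightarrow> card (clauses_of w) = Suc j"
proof -
  assume "w \<in> Wj n j"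
  then obtain B TI SI where w: "w = (B, TI, SI)" "length B = j" "distinct B"
    by (auto simp: Wj_def)
  have inj: "inj_on (\<lambda>l. (Some (B ! l), (!) B ` (TI ! l))) {..<length B}"
    using w by (auto simp: inj_on_def nth_eq_iff_index_eq)
  show ?thesis
    using w card_image[OF inj] by (simp add: clauses_of_def, subst card_insert_disjoint) auto
qed


lemma set_pmf_iid: "xs \<in> set_pmf (iid_list m p) \<Longrightarrow> set xs \<subseteq> set_pmf p"
  by (induction m arbitrary: xs) (auto, blast)

lemma horn_finite_card:
  "finite (horn_clauses n) \<and> n * 2 ^ n \<le> card (horn_clauses n)"
proof -
  have sub: "horn_clauses n \<subseteq> insert None (Some ` {1..n}) \<times> Pow {1..n}"
    by (auto simp: horn_clauses_def)
  have fin: "finite (horn_clauses n)"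
    by (rule finite_subset[OF sub]) auto
  have sub2: "Some ` {1..n} \<times> Pow {1..n} \<subseteq> horn_clauses n"
    by (auto simp: horn_clauses_def)
  have "card (Some ` {1..n} \<times> Pow {1..n}) = n * 2 ^ n"
    by (simp add: card_cartesian_product card_image card_Pow)
  with card_mono[OF fin sub2] fin show ?thesis by simp
qed

lemma main_bound:
  fixes c :: real
  assumes c: "c > 0" and n: "n \<ge> 1" and m: "real m \<le> c * 2 ^ n"
  shows "measure_pmf.prob (bind_pmf (Omega n m) (pur_rejects_within k)) {True}
         \<le> (\<Sum>j\<in>{1..k}. 2 ^ (j * j) * 2 ^ j * c ^ (j + 1)) / real n"
proof -
  define H where "H = horn_clauses n"
  define N where "N = card H"
  define p where "p = pmf_of_set H"
  define E where "E = (\<lambda>w. {xs. clauses_of w \<subseteq> set xs})"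
  define Bad where "Bad = (\<Union>j\<in>{1..k}. \<Union>w\<in>Wj n j. E w)"
  have finH: "finite H" and NH0: "n * 2 ^ n \<le> N"
    using horn_finite_card[of n] by (auto simp: H_def N_def)
  have NH: "real n * 2 ^ n \<le> real N"
    using NH0 by (metis of_nat_le_iff of_nat_mult of_nat_numeral of_nat_power)
  have N0: "real N > 0" using NH n by (smt (verit) of_nat_0_less_iff of_nat_1 of_nat_le_iff mult_pos_pos zero_less_power)
  then have Hne: "H \<noteq> {}" using finH by (auto simp: N_def)
  have pq: "\<And>x. pmf p x \<le> 1 / real N"
    using finH Hne by (auto simp: p_def N_def indicator_def)
  have mN: "real m / real N \<le> c / real n"
  proof -
    have "real m / real N \<le> c * 2 ^ n / (real n * 2 ^ n)"
      using m NH N0 n c by (intro frac_le) auto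
    also have "\<dots> = c / real n" by simp
    finally show ?thesis .
  qed
  have "measure_pmf.prob (bind_pmf (Omega n m) (pur_rejects_within k)) {True}
      = (\<integral>\<Phi>. measure_pmf.prob (pur_rejects_within k \<Phi>) {True} \<partial>measure_pmf (Omega n m))"
    by (rule prob_bind_pmf)
  also have "\<dots> \<le> (\<integral>\<Phi>. indicator Bad \<Phi> \<partial>measure_pmf (Omega n m))"
  proof (rule integral_mono_AE)
    show "integrable (measure_pmf (Omega n m)) (\<lambda>\<Phi>. measure_pmf.prob (pur_rejects_within k \<Phi>) {True})"
      by (intro measure_pmf.integrable_const_bound[where B=1]) auto
    show "integrable (measure_pmf (Omega n m)) (indicator Bad :: _ \<Rightarrow> real)"
      by (intro integrable_real_indicator) (auto simp: measure_pmf.emeasure_finite less_top[symmetric])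
    show "AE \<Phi> in measure_pmf (Omega n m). measure_pmf.prob (pur_rejects_within k \<Phi>) {True} \<le> indicator Bad \<Phi>"
    proof (rule AE_pmfI)
      fix \<Phi> assume "\<Phi> \<in> set_pmf (Omega n m)"
      then have sub: "set \<Phi> \<subseteq> horn_clauses n"
        using set_pmf_iid[of \<Phi> m p] finH Hne by (auto simp: Omega_def p_def H_def)
      show "measure_pmf.prob (pur_rejects_within k \<Phi>) {True} \<le> indicator Bad \<Phi>"
      proof (cases "True \<in> set_pmf (pur_rejects_within k \<Phi>)")
        case True
        then have "\<Phi> \<in> Bad" using bad_witness[OF sub True] by (auto simp: Bad_def E_def)
        then show ?thesis by simp
      next
        case False
        then have "measure_pmf.prob (pur_rejects_within k \<Phi>) {True} = 0"
          by (simp add: measure_pmf_zero_iff)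
        then show ?thesis by simp
      qed
    qed
  qed
  also have "\<dots> = measure_pmf.prob (Omega n m) Bad" by simp
  also have "\<dots> \<le> (\<Sum>j\<in>{1..k}. measure_pmf.prob (Omega n m) (\<Union>w\<in>Wj n j. E w))"
    unfolding Bad_def by (rule measure_pmf.finite_measure_subadditive_finite) auto
  also have "\<dots> \<le> (\<Sum>j\<in>{1..k}. \<Sum>w\<in>Wj n j. measure_pmf.prob (Omega n m) (E w))"
    using finite_card_Wj by (intro sum_mono measure_pmf.finite_measure_subadditive_finite) auto
  also have "\<dots> \<le> (\<Sum>j\<in>{1..k}. \<Sum>w\<in>Wj n j. (real m / real N) ^ (j + 1))"
  proof (intro sum_mono)
    fix j w assume "w \<in> Wj n j"
    have "measure_pmf.prob (Omega n m) (E w) \<le> (real m * (1 / real N)) ^ card (clauses_of w)"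
      unfolding Omega_def E_def p_def[symmetric] H_def[symmetric]
      by (rule iid_subset_bound[OF pq]) (simp add: clauses_of_def split: prod.splits)
    then show "measure_pmf.prob (Omega n m) (E w) \<le> (real m / real N) ^ (j + 1)"
      using card_clauses_of[OF \<open>w \<in> Wj n j\<close>] by simp
  qed
  also have "\<dots> = (\<Sum>j\<in>{1..k}. real (card (Wj n j)) * (real m / real N) ^ (j + 1))"
    by simp
  also have "\<dots> \<le> (\<Sum>j\<in>{1..k}. 2 ^ (j * j) * 2 ^ j * c ^ (j + 1) / real n)"
  proof (intro sum_mono)
    fix j
    have "real (card (Wj n j)) * (real m / real N) ^ (j + 1)
        \<le> real (n ^ j * (2 ^ j) ^ j * 2 ^ j) * (c / real n) ^ (j + 1)"
    proof (intro mult_mono power_mono)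
      show "real (card (Wj n j)) \<le> real (n ^ j * (2 ^ j) ^ j * 2 ^ j)"
        using finite_card_Wj[of n j] of_nat_le_iff by blast
    qed (use mN in auto)
    also have "\<dots> = 2 ^ (j * j) * 2 ^ j * c ^ (j + 1) / real n"
      using n by (simp add: power_mult[symmetric] power_divide field_simps)
    finally show "real (card (Wj n j)) * (real m / real N) ^ (j + 1) \<le> 2 ^ (j * j) * 2 ^ j * c ^ (j + 1) / real n" .
  qed
  also have "\<dots> = (\<Sum>j\<in>{1..k}. 2 ^ (j * j) * 2 ^ j * c ^ (j + 1)) / real n"
    by (simp add: sum_divide_distrib)
  finally show ?thesis .
qed


theorem mainTheorem8:
  fixes c :: real and k :: nat
  assumes "c > 0" and "k \<ge> 1"
  shows "(\<lambda>n. measure_pmf.prob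
            (bind_pmf (Omega n (nat \<lfloor>c * 2 ^ n\<rfloor>)) (pur_rejects_within k)) {False})
         \<longlonglongrightarrow> 1"
proof -
  define K where "K = (\<Sum>j\<in>{1..k}. 2 ^ (j * j) * 2 ^ j * c ^ (j + 1))"
  define f where "f = (\<lambda>n. measure_pmf.prob
            (bind_pmf (Omega n (nat \<lfloor>c * 2 ^ n\<rfloor>)) (pur_rejects_within k)) {False})"
  have lb: "1 - K / real n \<le> f n" if "n \<ge> 1" for n
  proof -
    let ?M = "bind_pmf (Omega n (nat \<lfloor>c * 2 ^ n\<rfloor>)) (pur_rejects_within k)"
    have eq: "UNIV - {True} = {False}" by auto
    have "f n = 1 - measure_pmf.prob ?M {True}"
      using measure_pmf.prob_compl[of "{True}" ?M] by (simp add: f_def eq)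
    moreover have "measure_pmf.prob ?M {True} \<le> K / real n"
      unfolding K_def
      by (rule main_bound[OF assms(1) that]) (rule of_nat_floor, use assms(1) in simp)
    ultimately show ?thesis by simp
  qed
  have "(\<lambda>n. 1 - K / real n) \<longlonglongrightarrow> 1 - 0"
    by (intro tendsto_intros)
  then have l: "(\<lambda>n. 1 - K / real n) \<longlonglongrightarrow> 1" by simp
  have "f \<longlonglongrightarrow> 1"
  proof (rule tendsto_sandwich[OF _ _ l tendsto_const])
    show "\<forall>\<^sub>F n in sequentially. 1 - K / real n \<le> f n"
      using lb by (intro eventually_sequentiallyI[of 1]) auto
    show "\<forall>\<^sub>F n in sequentially. f n \<le> 1"
      by (auto simp: f_def)
  qed
  then show ?thesis by (simp add: f_def)
qed

end
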